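(* A commutative Bezout domain $R$ is a commutative elementary divisor domain if and only if for all $a_1,a_2,b_1,b_2\in R$ with $(a_1,a_2)=(b_1,b_2)=1$ there exists $r\in R$ such that $b_1+rb_2=\alpha\beta$ for some $\alpha,\beta\in R$ with $(\alpha,\beta)=(a_1,\alpha)=(a_2,\beta)=1$.
   Context: A commutative Bezout domain is a commutative integral domain with $1\ne0$ in which every finitely generated ideal is principal; $(\cdot,\cdot)$ denotes a greatest common divisor. $R$ is an elementary divisor ring if every matrix $A$ over $R$ admits invertible $P,Q$ with $PAQ$ a diagonal matrix $\mathrm{diag}(d_1,\dots,d_r,0,\dots,0)$ with $d_i\mid d_{i+1}$. *)

theory Defs
  imports Main "Jordan_Normal_Form.Matrix"
begin

definition fin_gen_ideal :: "'a::comm_ring_1 set \<Rightarrow> 'a set" where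
  "fin_gen_ideal S = {\<Sum>s\<in>S. c s * s | c. True}"

text \<open>Commutative Bezout domain: integral domain (1 \<noteq> 0 built into idom) in which every
  finitely generated ideal is principal.\<close>
definition bezout_domain :: "'a::idom itself \<Rightarrow> bool" where
  "bezout_domain _ \<longleftrightarrow>
     (\<forall>S::'a set. finite S \<longrightarrow> (\<exists>d. fin_gen_ideal S = {d * x | x. True}))"

definition gcd_one :: "'a::comm_ring_1 \<Rightarrow> 'a \<Rightarrow> bool" where
  "gcd_one a b \<longleftrightarrow> (\<forall>c. c dvd a \<longrightarrow> c dvd b \<longrightarrow> c dvd 1)"

text \<open>Diagonal m x n matrix diag(d_1,...,d_r,0,...,0) with d_i | d_(i+1) (the zero tail is
  forced by divisibility of consecutive diagonal entries, since 0 dvd x implies x = 0).\<close>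
definition smith_diag :: "'a::comm_ring_1 mat \<Rightarrow> bool" where
  "smith_diag D \<longleftrightarrow>
     (\<forall>i<dim_row D. \<forall>j<dim_col D. i \<noteq> j \<longrightarrow> D $$ (i, j) = 0) \<and>
     (\<forall>i. Suc i < min (dim_row D) (dim_col D) \<longrightarrow> D $$ (i, i) dvd D $$ (Suc i, Suc i))"

definition elementary_divisor_ring :: "'a::comm_ring_1 itself \<Rightarrow> bool" where
  "elementary_divisor_ring _ \<longleftrightarrow>
     (\<forall>m n (A::'a mat). A \<in> carrier_mat m n \<longrightarrow>
        (\<exists>P Q. P \<in> carrier_mat m m \<and> Q \<in> carrier_mat n n \<and>
               invertible_mat P \<and> invertible_mat Q \<and> smith_diag (P * A * Q)))"

end

theory Submission
  imports Defs
begin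


lemma fgi_mem: "finite S \<Longrightarrow> (\<Sum>s\<in>S. c s * s) \<in> fin_gen_ideal S"
  unfolding fin_gen_ideal_def by blast

lemma bez:
  assumes B: "bezout_domain TYPE('a::idom)"
  shows "\<exists>g s t. g = s*a + t*(b::'a) \<and> g dvd a \<and> g dvd b"
proof -
  obtain d where d: "fin_gen_ideal {a,b} = {d * x | x. True}"
    using B unfolding bezout_domain_def by (meson finite.emptyI finite_insert)
  have "d \<in> fin_gen_ideal {a,b}" using d by (metis (mono_tags, lifting) mem_Collect_eq mult_1_right)
  then obtain c where c: "d = (\<Sum>s\<in>{a,b}. c s * s)" unfolding fin_gen_ideal_def by blast
  have da: "d dvd a"
  proof -
    have "(\<Sum>s\<in>{a,b}. (\<lambda>s. if s = a then 1 else 0) s * s) \<in> fin_gen_ideal {a,b}"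
      by (rule fgi_mem) simp
    moreover have "(\<Sum>s\<in>{a,b}. (\<lambda>s. if s = a then 1 else 0) s * s) = a"
      by (cases "a = b") auto
    ultimately show ?thesis using d by auto
  qed
  have db: "d dvd b"
  proof -
    have "(\<Sum>s\<in>{a,b}. (\<lambda>s. if s = b then 1 else 0) s * s) \<in> fin_gen_ideal {a,b}"
      by (rule fgi_mem) simp
    moreover have "(\<Sum>s\<in>{a,b}. (\<lambda>s. if s = b then 1 else 0) s * s) = b"
      by (cases "a = b") auto
    ultimately show ?thesis using d by auto
  qed
  show ?thesis
  proof (cases "a = b")
    case True
    then have "d = c a * a + 0 * b" using c by simp
    then show ?thesis using da db by blast
  next
    case False
    then have "d = c a * a + c b * b" using c by simp
    then show ?thesis using da db by blast
  qed
qed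

lemma bez2:
  assumes B: "bezout_domain TYPE('a::idom)"
  shows "\<exists>g s t u w. a = g*u \<and> (b::'a) = g*w \<and> g = s*a + t*b \<and> s*u + t*w = 1"
proof -
  obtain g s t where g: "g = s*a + t*b" "g dvd a" "g dvd b" using bez[OF B] by blast
  obtain u where u: "a = g*u" using g(2) by (auto elim!: dvdE)
  obtain w where w: "b = g*w" using g(3) by (auto elim!: dvdE)
  note uw = u w
  show ?thesis
  proof (cases "g = 0")
    case True
    then show ?thesis using uw by (intro exI[of _ 0] exI[of _ 1] exI[of _ 0] exI[of _ 1] exI[of _ 0]) auto
  next
    case False
    have "g * 1 = s*(g*u) + t*(g*w)" using g(1) unfolding uw[symmetric] by simp
    also have "\<dots> = g * (s*u + t*w)" by (simp add: algebra_simps)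
    finally have "g * 1 = g * (s*u + t*w)" .
    then have "s*u + t*w = 1" using False by (metis mult_left_cancel)
    then show ?thesis using uw g by blast
  qed
qed


lemma cop_comb: "l*x + m*y = (1::'a::comm_ring_1) \<Longrightarrow> gcd_one x y"
  unfolding gcd_one_def by (metis dvd_add dvd_mult)

lemma cop_to_comb:
  assumes B: "bezout_domain TYPE('a::idom)" and "gcd_one x (y::'a)"
  shows "\<exists>l m. l*x + m*y = 1"
proof -
  obtain g s t where g: "g = s*x + t*y" "g dvd x" "g dvd y" using bez[OF B] by blast
  then have "g dvd 1" using assms(2) unfolding gcd_one_def by blast
  then obtain v where v: "1 = g*v" by (auto elim!: dvdE)
  have "(v*s)*x + (v*t)*y = (s*x + t*y)*v" by (simp add: algebra_simps)
  also have "\<dots> = 1" using g(1) v by simp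
  finally show ?thesis by blast
qed

lemma cop_sym: "gcd_one x y \<Longrightarrow> gcd_one y x" unfolding gcd_one_def by blast

lemma cop_dvd: "d dvd x \<Longrightarrow> gcd_one x y \<Longrightarrow> gcd_one d y"
  unfolding gcd_one_def by (meson dvd_trans)

lemma cop_dvd2: "d dvd y \<Longrightarrow> gcd_one x y \<Longrightarrow> gcd_one x d"
  unfolding gcd_one_def by (meson dvd_trans)

lemma cop_mult:
  assumes B: "bezout_domain TYPE('a::idom)" and "gcd_one x y" "gcd_one x (z::'a)"
  shows "gcd_one x (y*z)"
proof -
  obtain l m where 1: "l*x + m*y = 1" using cop_to_comb[OF B assms(2)] by blast
  obtain l' m' where 2: "l'*x + m'*z = 1" using cop_to_comb[OF B assms(3)] by blast
  have "(l*l'*x + l*m'*z + m*y*l')*x + (m*m')*(y*z) = (l*x + m*y)*(l'*x + m'*z)"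
    by (simp add: algebra_simps)
  also have "\<dots> = 1" using 1 2 by simp
  finally show ?thesis by (rule cop_comb)
qed

lemma cop_mult_left:
  assumes B: "bezout_domain TYPE('a::idom)" and "gcd_one x z" "gcd_one y (z::'a)"
  shows "gcd_one (x*y) z"
  using cop_mult[OF B, of z x y] assms cop_sym by blast

lemma cop_gauss:
  assumes B: "bezout_domain TYPE('a::idom)" and "gcd_one x y" "x dvd y*(z::'a)"
  shows "x dvd z"
proof -
  obtain l m where 1: "l*x + m*y = 1" using cop_to_comb[OF B assms(2)] by blast
  have "z = (l*x + m*y)*z" using 1 by simp
  also have "\<dots> = x*(l*z) + m*(y*z)" by (simp add: algebra_simps)
  finally have "z = x*(l*z) + m*(y*z)" .
  then show ?thesis using assms(3) by (metis dvd_add dvd_mult dvd_triv_left)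
qed

lemma cop_unit: "u dvd 1 \<Longrightarrow> gcd_one u x"
  unfolding gcd_one_def by (meson dvd_trans)



definition KProp :: "'a::idom itself \<Rightarrow> bool" where
  "KProp _ \<longleftrightarrow> (\<forall>a b c::'a. (\<forall>d. d dvd a \<longrightarrow> d dvd b \<longrightarrow> d dvd c \<longrightarrow> d dvd 1) \<longrightarrow>
      (\<exists>p t. gcd_one (a*p) (b*p + c*t)))"

definition CProp :: "'a::idom itself \<Rightarrow> bool" where
  "CProp _ \<longleftrightarrow> (\<forall>a1 a2 b1 b2 :: 'a. gcd_one a1 a2 \<longrightarrow> gcd_one b1 b2 \<longrightarrow>
       (\<exists>r \<alpha> \<beta>. b1 + r * b2 = \<alpha> * \<beta> \<and>
                 gcd_one \<alpha> \<beta> \<and> gcd_one a1 \<alpha> \<and> gcd_one a2 \<beta>))"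

lemma C_imp_K:
  assumes B: "bezout_domain TYPE('a::idom)" and C: "CProp TYPE('a)"
  shows "KProp TYPE('a)"
  unfolding KProp_def
proof (intro allI impI)
  fix a b c :: 'a
  assume prim: "\<forall>d. d dvd a \<longrightarrow> d dvd b \<longrightarrow> d dvd c \<longrightarrow> d dvd 1"
  obtain h s t where h: "h = s*b + t*c" "h dvd b" "h dvd c" using bez[OF B] by blast
  obtain b' where b': "b = h*b'" using h(2) by (auto elim!: dvdE)
  obtain c' where c': "c = h*c'" using h(3) by (auto elim!: dvdE)
  show "\<exists>p t. gcd_one (a*p) (b*p + c*t)"
  proof (cases "h = 0")
    case True
    then have "b = 0" "c = 0" using b' c' by auto
    then have "a dvd 1" using prim by auto
    then show ?thesis by (intro exI[of _ 1] exI[of _ 0]) (simp add: cop_unit)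
  next
    case False
    have "h * 1 = s*(h*b') + t*(h*c')" using h(1) unfolding b'[symmetric] c'[symmetric] by simp
    also have "\<dots> = h * (s*b' + t*c')" by (simp add: algebra_simps)
    finally have sb: "s*b' + t*c' = 1" using False by (metis mult_left_cancel)
    have cop_ah: "gcd_one a h" unfolding gcd_one_def
      using prim h(2,3) by (meson dvd_trans)
    have cop_bc: "gcd_one b' c'" using sb by (rule cop_comb)
    obtain r \<alpha> \<beta> where C1: "b' + r*c' = \<alpha>*\<beta>" "gcd_one \<alpha> \<beta>" "gcd_one a \<alpha>" "gcd_one h \<beta>"
      using C cop_ah cop_bc unfolding CProp_def by blast
    have cop_bc': "gcd_one \<beta> c'" unfolding gcd_one_def
    proof (intro allI impI)
      fix d assume d: "d dvd \<beta>" "d dvd c'"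
      then have "d dvd b' + r*c'" using C1(1) by (metis dvd_mult)
      then have "d dvd b'" using d(2) by (metis dvd_add_left_iff dvd_mult)
      then show "d dvd 1" using cop_bc d(2) unfolding gcd_one_def by blast
    qed
    have "gcd_one \<beta> (c'*h*\<alpha>)"
      using cop_mult[OF B cop_mult[OF B cop_bc' cop_sym[OF C1(4)]] cop_sym[OF C1(2)]] .
    then obtain p k where pk: "p*\<beta> + k*(c'*h*\<alpha>) = 1" using cop_to_comb[OF B] by blast
    define t' where "t' = k*h*\<alpha>*\<alpha> + p*r"
    have id: "p*b' + c'*t' = \<alpha>*(p*\<beta> + k*(c'*h*\<alpha>)) + p*(b' + r*c' - \<alpha>*\<beta>)"
      unfolding t'_def by (simp add: algebra_simps)
    have e1: "p*b' + c'*t' = \<alpha>" unfolding id pk C1(1) by simp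
    have "b*p + c*t' = h*(p*b' + c'*t')" unfolding b' c' by (simp add: algebra_simps)
    then have e2: "b*p + c*t' = h*\<alpha>" using e1 by simp
    have "\<beta>*p + k*(c'*h*\<alpha>) = 1" using pk by (simp add: mult.commute)
    then have cp: "gcd_one p (c'*h*\<alpha>)" by (rule cop_comb)
    have "h dvd c'*h*\<alpha>" "\<alpha> dvd c'*h*\<alpha>" by simp_all
    then have cph: "gcd_one p h" and cpa: "gcd_one p \<alpha>" using cop_dvd2[OF _ cp] by blast+
    have "gcd_one (a*p) (h*\<alpha>)"
      by (rule cop_mult_left[OF B cop_mult[OF B cop_ah C1(3)] cop_mult[OF B cph cpa]])
    then have "gcd_one (a*p) (b*p + c*t')" using e2 by simp
    then show ?thesis by blast
  qed
qed

lemma K_imp_C: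
  assumes B: "bezout_domain TYPE('a::idom)" and K: "KProp TYPE('a)"
  shows "CProp TYPE('a)"
  unfolding CProp_def
proof (intro allI impI)
  fix a1 a2 b1 b2 :: 'a
  assume ca: "gcd_one a1 a2" and cb: "gcd_one b1 b2"
  have prim: "\<forall>d. d dvd a1 \<longrightarrow> d dvd a2*b1 \<longrightarrow> d dvd a2*b2 \<longrightarrow> d dvd 1"
  proof (intro allI impI)
    fix d assume d: "d dvd a1" "d dvd a2*b1" "d dvd a2*b2"
    have "gcd_one d a2" using cop_dvd[OF d(1) ca] .
    then have "d dvd b1" "d dvd b2" using cop_gauss[OF B] d by blast+
    then show "d dvd 1" using cb unfolding gcd_one_def by blast
  qed
  have KK: "\<And>a b c::'a. (\<forall>d. d dvd a \<longrightarrow> d dvd b \<longrightarrow> d dvd c \<longrightarrow> d dvd 1) \<Longrightarrow> \<exists>p t. gcd_one (a*p) (b*p + c*t)"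
    using K unfolding KProp_def by blast
  obtain p t where pt: "gcd_one (a1*p) (a2*b1*p + a2*b2*t)" using KK[OF prim] by blast
  define w where "w = b1*p + b2*t"
  have "a2*b1*p + a2*b2*t = a2*w" unfolding w_def by (simp add: algebra_simps)
  then have pt': "gcd_one (a1*p) (a2*w)" using pt by simp
  have d1: "a1 dvd a1*p" "p dvd a1*p" "a2 dvd a2*w" "w dvd a2*w" by simp_all
  have c1w: "gcd_one a1 w" using cop_dvd[OF d1(1) cop_dvd2[OF d1(4) pt']] .
  have cpa2: "gcd_one p a2" using cop_dvd[OF d1(2) cop_dvd2[OF d1(3) pt']] .
  have cpw: "gcd_one p w" using cop_dvd[OF d1(2) cop_dvd2[OF d1(4) pt']] .
  have cpb2: "gcd_one p b2" unfolding gcd_one_def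
  proof (intro allI impI)
    fix d assume d: "d dvd p" "d dvd b2"
    then have "d dvd w" unfolding w_def by (intro dvd_add dvd_mult dvd_mult2)
    then show "d dvd 1" using cpw d(1) unfolding gcd_one_def by blast
  qed
  have cpM: "gcd_one p (b2*a2*w)" using cop_mult[OF B cop_mult[OF B cpb2 cpa2] cpw] .
  then obtain p' k where pk: "p'*p + k*(b2*a2*w) = 1" using cop_to_comb[OF B cpM] by blast
  define r where "r = t*p' - k*a2*w*b1"
  have id: "b1 + r*b2 = w*p' + b1*(1 - (p'*p + k*(b2*a2*w)))"
    unfolding r_def w_def by (simp add: algebra_simps)
  have e: "b1 + r*b2 = w*p'" unfolding id pk by simp
  have g1: "gcd_one w p'" by (rule cop_comb[of "k*b2*a2" _ p]) (use pk in \<open>simp add: algebra_simps\<close>)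
  have g2: "gcd_one a2 p'" by (rule cop_comb[of "k*b2*w" _ p]) (use pk in \<open>simp add: algebra_simps\<close>)
  show "\<exists>r \<alpha> \<beta>. b1 + r * b2 = \<alpha> * \<beta> \<and> gcd_one \<alpha> \<beta> \<and> gcd_one a1 \<alpha> \<and> gcd_one a2 \<beta>"
    using e g1 c1w g2 by blast
qed



lemma bez3:
  assumes B: "bezout_domain TYPE('a::idom)"
  shows "\<exists>h l0 l1 l2. h = l0*a + l1*b + l2*(c::'a) \<and> h dvd a \<and> h dvd b \<and> h dvd c"
proof -
  obtain g s t where g: "g = s*a + t*b" "g dvd a" "g dvd b" using bez[OF B] by blast
  obtain h s' t' where h: "h = s'*g + t'*c" "h dvd g" "h dvd c" using bez[OF B] by blast
  have "h = (s'*s)*a + (s'*t)*b + t'*c" using h(1) g(1) by (simp add: algebra_simps)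
  moreover have "h dvd a" "h dvd b" using h(2) g(2,3) by (meson dvd_trans)+
  ultimately show ?thesis using h(3) by blast
qed

lemma K_good2:
  assumes B: "bezout_domain TYPE('a::idom)" and K: "KProp TYPE('a)"
  shows "\<exists>x0 x1 y0 y1. x0*(a00*y0 + a01*y1) + x1*(a10*y0 + a11*y1) dvd a00
     \<and> x0*(a00*y0 + a01*y1) + x1*(a10*y0 + a11*y1) dvd a01
     \<and> x0*(a00*y0 + a01*y1) + x1*(a10*y0 + a11*y1) dvd a10
     \<and> x0*(a00*y0 + a01*y1) + x1*(a10*y0 + a11*(y1::'a)) dvd a11"
proof -
  obtain g0 s t u w where g: "a00 = g0*u" "a01 = g0*w" "s*u + t*w = 1"
    using bez2[OF B, of a00 a01] by blast
  define b where "b = s*a10 + t*a11"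
  define c where "c = -w*a10 + u*a11"
  have a10: "a10 = b*u - c*t"
  proof -
    have "b*u - c*t = a10*(s*u + t*w)" unfolding b_def c_def by (simp add: algebra_simps)
    then show ?thesis using g(3) by simp
  qed
  have a11: "a11 = b*w + c*s"
  proof -
    have "b*w + c*s = a11*(s*u + t*w)" unfolding b_def c_def by (simp add: algebra_simps)
    then show ?thesis using g(3) by simp
  qed
  obtain h l0 l1 l2 where h: "h = l0*g0 + l1*b + l2*c" "h dvd g0" "h dvd b" "h dvd c"
    using bez3[OF B] by blast
  have hdv: "h dvd a00" "h dvd a01" "h dvd a10" "h dvd a11"
    unfolding g(1,2) a10 a11 using h(2,3,4) by (auto intro!: dvd_mult2 dvd_add dvd_diff)
  show ?thesis
  proof (cases "h = 0")
    case True
    then have "a00 = 0" "a01 = 0" "a10 = 0" "a11 = 0" using hdv by auto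
    then show ?thesis by (intro exI[of _ 0]) simp
  next
    case False
    obtain a where a: "g0 = h*a" using h(2) by (auto elim!: dvdE)
    obtain b' where b': "b = h*b'" using h(3) by (auto elim!: dvdE)
    obtain c' where c': "c = h*c'" using h(4) by (auto elim!: dvdE)
    have "h*1 = l0*(h*a) + l1*(h*b') + l2*(h*c')" using h(1) unfolding a[symmetric] b'[symmetric] c'[symmetric] by simp
    also have "\<dots> = h*(l0*a + l1*b' + l2*c')" by (simp add: algebra_simps)
    finally have one: "l0*a + l1*b' + l2*c' = 1" using False by (metis mult_left_cancel)
    have prim: "\<forall>d. d dvd a \<longrightarrow> d dvd b' \<longrightarrow> d dvd c' \<longrightarrow> d dvd 1"
    proof (intro allI impI)
      fix d assume "d dvd a" "d dvd b'" "d dvd c'"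
      then have "d dvd l0*a + l1*b' + l2*c'" by (intro dvd_add dvd_mult)
      then show "d dvd 1" using one by simp
    qed
    have KK: "\<And>a b c::'a. (\<forall>d. d dvd a \<longrightarrow> d dvd b \<longrightarrow> d dvd c \<longrightarrow> d dvd 1) \<Longrightarrow> \<exists>p t. gcd_one (a*p) (b*p + c*t)"
      using K unfolding KProp_def by blast
    obtain p q where pq: "gcd_one (a*p) (b'*p + c'*q)" using KK[OF prim] by blast
    obtain l m where lm: "l*(a*p) + m*(b'*p + c'*q) = 1" using cop_to_comb[OF B pq] by blast
    define y0 where "y0 = s*p - w*q"
    define y1 where "y1 = t*p + u*q"
    have r0: "a00*y0 + a01*y1 = g0*p" unfolding g(1,2) y0_def y1_def
    proof -
      have "g0 * u * (s * p - w * q) + g0 * w * (t * p + u * q) = g0*p*(s*u + t*w)" by (simp add: algebra_simps)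
      then show "g0 * u * (s * p - w * q) + g0 * w * (t * p + u * q) = g0 * p" using g(3) by simp
    qed
    have r1: "a10*y0 + a11*y1 = b*p + c*q"
    proof -
      have "a10*y0 + a11*y1 = (s*a10 + t*a11)*p + (-w*a10 + u*a11)*q" unfolding y0_def y1_def by (simp add: algebra_simps)
      then show ?thesis unfolding b_def c_def .
    qed
    have "l*(a00*y0 + a01*y1) + m*(a10*y0 + a11*y1) = l*(g0*p) + m*(b*p + c*q)" using r0 r1 by simp
    also have "\<dots> = h*(l*(a*p) + m*(b'*p + c'*q))" unfolding a b' c' by (simp add: algebra_simps)
    also have "\<dots> = h" using lm by simp
    finally have E: "l*(a00*y0 + a01*y1) + m*(a10*y0 + a11*y1) = h" .
    show ?thesis using hdv unfolding E[symmetric] by blast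
  qed
qed

lemma rowgood:
  assumes B: "bezout_domain TYPE('a::idom)"
  shows "\<exists>z. \<forall>j<(n::nat). (\<Sum>k<n. g k * z k) dvd (g j :: 'a)"
proof (induction n)
  case 0
  then show ?case by simp
next
  case (Suc n)
  then obtain z where z: "\<forall>j<n. (\<Sum>k<n. g k * z k) dvd g j" by blast
  obtain d s t where d: "d = s*(\<Sum>k<n. g k * z k) + t*g n" "d dvd (\<Sum>k<n. g k * z k)" "d dvd g n"
    using bez[OF B] by blast
  define z' where "z' = (\<lambda>j. if j = n then t else s * z j)"
  have "(\<Sum>k<Suc n. g k * z' k) = (\<Sum>k<n. g k * z' k) + g n * t" by (simp add: z'_def)
  also have "(\<Sum>k<n. g k * z' k) = (\<Sum>k<n. s * (g k * z k))" by (rule sum.cong) (auto simp: z'_def)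
  also have "\<dots> = s * (\<Sum>k<n. g k * z k)" by (simp add: sum_distrib_left)
  finally have "(\<Sum>k<Suc n. g k * z' k) = d" using d(1) by (simp add: mult.commute)
  have "\<forall>j<Suc n. d dvd g j"
  proof (intro allI impI)
    fix j assume j: "j < Suc n"
    show "d dvd g j"
    proof (cases "j = n")
      case True then show ?thesis using d(3) by simp
    next
      case False then have "j < n" using j by simp
      then show ?thesis using dvd_trans[OF d(2)] z by blast
    qed
  qed
  then show ?case using \<open>(\<Sum>k<Suc n. g k * z' k) = d\<close> by metis
qed

definition goodf :: "nat \<Rightarrow> nat \<Rightarrow> (nat \<Rightarrow> nat \<Rightarrow> 'a::comm_ring_1) \<Rightarrow> bool" where
  "goodf m n f \<longleftrightarrow> (\<exists>x y. \<forall>i<m. \<forall>j<n. (\<Sum>i<m. \<Sum>j<n. x i * f i j * y j) dvd f i j)"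

lemma goodall:
  assumes B: "bezout_domain TYPE('a::idom)" and K: "KProp TYPE('a)"
  shows "goodf m n (f :: nat \<Rightarrow> nat \<Rightarrow> 'a)"
proof (induction m)
  case 0
  then show ?case unfolding goodf_def by simp
next
  case (Suc m)
  then obtain x y where xy: "\<forall>i<m. \<forall>j<n. (\<Sum>i<m. \<Sum>j<n. x i * f i j * y j) dvd f i j"
    unfolding goodf_def by blast
  obtain z where z: "\<forall>j<n. (\<Sum>k<n. f m k * z k) dvd f m j" using rowgood[OF B] by blast
  define N00 where "N00 = (\<Sum>j<n. f m j * z j)"
  define N01 where "N01 = (\<Sum>j<n. f m j * y j)"
  define N10 where "N10 = (\<Sum>i<m. \<Sum>j<n. x i * f i j * z j)"
  define N11 where "N11 = (\<Sum>i<m. \<Sum>j<n. x i * f i j * y j)"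
  obtain p0 p1 q0 q1 where pq:
    "p0*(N00*q0 + N01*q1) + p1*(N10*q0 + N11*q1) dvd N00"
    "p0*(N00*q0 + N01*q1) + p1*(N10*q0 + N11*q1) dvd N11"
    using K_good2[OF B K, of N00 N01 N10 N11] by blast
  define E where "E = p0*(N00*q0 + N01*q1) + p1*(N10*q0 + N11*q1)"
  define X where "X = (\<lambda>i. if i = m then p0 else p1 * x i)"
  define Y where "Y = (\<lambda>j. q0 * z j + q1 * y j)"
  have S1: "(\<Sum>i<m. \<Sum>j<n. X i * f i j * Y j) = p1*(N10*q0 + N11*q1)"
  proof -
    have "(\<Sum>i<m. \<Sum>j<n. X i * f i j * Y j) = (\<Sum>i<m. \<Sum>j<n. p1*q0*(x i * f i j * z j) + p1*q1*(x i * f i j * y j))"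
      by (rule sum.cong[OF refl], rule sum.cong[OF refl]) (auto simp: X_def Y_def algebra_simps)
    also have "\<dots> = p1*q0*N10 + p1*q1*N11"
      unfolding N10_def N11_def by (simp add: sum.distrib sum_distrib_left)
    finally show ?thesis by (simp add: algebra_simps)
  qed
  have S2: "(\<Sum>j<n. X m * f m j * Y j) = p0*(N00*q0 + N01*q1)"
  proof -
    have "(\<Sum>j<n. X m * f m j * Y j) = (\<Sum>j<n. p0*q0*(f m j * z j) + p0*q1*(f m j * y j))"
      by (rule sum.cong[OF refl]) (auto simp: X_def Y_def algebra_simps)
    also have "\<dots> = p0*q0*N00 + p0*q1*N01"
      unfolding N00_def N01_def by (simp add: sum.distrib sum_distrib_left)
    finally show ?thesis by (simp add: algebra_simps)
  qed
  have SE: "(\<Sum>i<Suc m. \<Sum>j<n. X i * f i j * Y j) = E"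
    unfolding E_def using S1 S2 by (simp add: add.commute)
  have "\<forall>i<Suc m. \<forall>j<n. E dvd f i j"
  proof (intro allI impI)
    fix i j assume i: "i < Suc m" and j: "j < n"
    show "E dvd f i j"
    proof (cases "i = m")
      case True
      have "N00 dvd f m j" using z j unfolding N00_def by blast
      then show ?thesis using dvd_trans[OF pq(1)] True unfolding E_def by blast
    next
      case False
      then have "i < m" using i by simp
      then have "N11 dvd f i j" using xy j unfolding N11_def by blast
      then show ?thesis using dvd_trans[OF pq(2)] unfolding E_def by blast
    qed
  qed
  then show ?case unfolding goodf_def SE[symmetric] by blast
qed



lemma inv_intro:
  assumes "P \<in> carrier_mat n n" "P' \<in> carrier_mat n n" "P * P' = 1\<^sub>m n" "P' * P = 1\<^sub>m n"
  shows "invertible_mat P"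
  using assms unfolding invertible_mat_def inverts_mat_def by auto

lemma inv_obtain:
  assumes "invertible_mat P" "P \<in> carrier_mat n n"
  shows "\<exists>P'. P' \<in> carrier_mat n n \<and> P * P' = 1\<^sub>m n \<and> P' * P = 1\<^sub>m n"
proof -
  obtain P' where P': "P * P' = 1\<^sub>m (dim_row P)" "P' * P = 1\<^sub>m (dim_row P')"
    using assms(1) unfolding invertible_mat_def inverts_mat_def by blast
  have r: "dim_row P = n" "dim_col P = n" using assms(2) by auto
  have "dim_col P' = n" using arg_cong[OF P'(1), of dim_col] r by simp
  moreover have "dim_row P' = n" using arg_cong[OF P'(2), of dim_col] r by simp
  ultimately show ?thesis using P' r by (intro exI[of _ P']) auto
qed

lemma inv_one: "invertible_mat (1\<^sub>m n :: 'a::semiring_1 mat)"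
  by (rule inv_intro[of _ n "1\<^sub>m n"]) auto

lemma inv_mult:
  assumes P: "P \<in> carrier_mat n n" "invertible_mat P" and Q: "Q \<in> carrier_mat n n" "invertible_mat Q"
  shows "invertible_mat (P * Q)"
proof -
  obtain P' where P': "P' \<in> carrier_mat n n" "P * P' = 1\<^sub>m n" "P' * P = 1\<^sub>m n" using inv_obtain P by blast
  obtain Q' where Q': "Q' \<in> carrier_mat n n" "Q * Q' = 1\<^sub>m n" "Q' * Q = 1\<^sub>m n" using inv_obtain Q by blast
  have 1: "P * Q * (Q' * P') = 1\<^sub>m n"
  proof -
    have "P * Q * (Q' * P') = P * (Q * (Q' * P'))" by (rule assoc_mult_mat) (use P Q P' Q' in auto)
    also have "Q * (Q' * P') = Q * Q' * P'" by (rule assoc_mult_mat[symmetric]) (use P Q P' Q' in auto)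
    finally show ?thesis using Q'(2) P'(2) P P' by simp
  qed
  have 2: "Q' * P' * (P * Q) = 1\<^sub>m n"
  proof -
    have "Q' * P' * (P * Q) = Q' * (P' * (P * Q))" by (rule assoc_mult_mat) (use P Q P' Q' in auto)
    also have "P' * (P * Q) = P' * P * Q" by (rule assoc_mult_mat[symmetric]) (use P Q P' Q' in auto)
    finally show ?thesis using Q'(3) P'(3) Q Q' by simp
  qed
  show ?thesis by (rule inv_intro[OF _ _ 1 2]) (use P Q P' Q' in auto)
qed

lemma inv_block:
  fixes A :: "'a::comm_ring_1 mat"
  assumes A: "A \<in> carrier_mat n1 n1" "invertible_mat A" and D: "D \<in> carrier_mat n2 n2" "invertible_mat D"
  shows "invertible_mat (four_block_mat A (0\<^sub>m n1 n2) (0\<^sub>m n2 n1) D)"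
proof -
  obtain A' where A': "A' \<in> carrier_mat n1 n1" "A * A' = 1\<^sub>m n1" "A' * A = 1\<^sub>m n1" using inv_obtain A by blast
  obtain D' where D': "D' \<in> carrier_mat n2 n2" "D * D' = 1\<^sub>m n2" "D' * D = 1\<^sub>m n2" using inv_obtain D by blast
  have 1: "four_block_mat A (0\<^sub>m n1 n2) (0\<^sub>m n2 n1) D * four_block_mat A' (0\<^sub>m n1 n2) (0\<^sub>m n2 n1) D' = 1\<^sub>m (n1+n2)"
    by (subst mult_four_block_mat[of _ n1 n1 _ n2 _ n2 _ _ n1 _ n2]) (use A D A' D' in auto)
  have 2: "four_block_mat A' (0\<^sub>m n1 n2) (0\<^sub>m n2 n1) D' * four_block_mat A (0\<^sub>m n1 n2) (0\<^sub>m n2 n1) D = 1\<^sub>m (n1+n2)"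
    by (subst mult_four_block_mat[of _ n1 n1 _ n2 _ n2 _ _ n1 _ n2]) (use A D A' D' in auto)
  show ?thesis by (rule inv_intro[OF _ _ 1 2]) (use A D A' D' in auto)
qed

lemma mult_sum:
  assumes "A \<in> carrier_mat m k" "B \<in> carrier_mat k n" "i < m" "j < n"
  shows "(A * B) $$ (i,j) = (\<Sum>l<k. A $$ (i,l) * B $$ (l,j))"
  using assms by (auto simp: scalar_prod_def atLeast0LessThan intro!: sum.cong)

lemma mult_vec_sum:
  assumes "A \<in> carrier_mat m k" "v \<in> carrier_vec k" "i < m"
  shows "(A *\<^sub>v v) $ i = (\<Sum>l<k. A $$ (i,l) * v $ l)"
  using assms by (auto simp: scalar_prod_def atLeast0LessThan intro!: sum.cong)

lemma blockdiag_mult_vec: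
  assumes A: "A \<in> carrier_mat n1 n1" and D: "D \<in> carrier_mat n2 n2" and v: "v \<in> carrier_vec (n1+n2)"
  shows "four_block_mat A (0\<^sub>m n1 n2) (0\<^sub>m n2 n1) D *\<^sub>v v = (A *\<^sub>v vec_first v n1) @\<^sub>v (D *\<^sub>v vec_last v n2)"
proof -
  have "four_block_mat A (0\<^sub>m n1 n2) (0\<^sub>m n2 n1) D *\<^sub>v v
     = four_block_mat A (0\<^sub>m n1 n2) (0\<^sub>m n2 n1) D *\<^sub>v (vec_first v n1 @\<^sub>v vec_last v n2)"
    using v by simp
  also have "\<dots> = (A *\<^sub>v vec_first v n1 + 0\<^sub>m n1 n2 *\<^sub>v vec_last v n2) @\<^sub>v (0\<^sub>m n2 n1 *\<^sub>v vec_first v n1 + D *\<^sub>v vec_last v n2)"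
    by (rule four_block_mat_mult_vec) (use A D in auto)
  also have "\<dots> = (A *\<^sub>v vec_first v n1) @\<^sub>v (D *\<^sub>v vec_last v n2)"
    using A D by (auto intro!: arg_cong2[where f = append_vec] eq_vecI simp: scalar_prod_def)
  finally show ?thesis .
qed



definition mat2 :: "'a \<Rightarrow> 'a \<Rightarrow> 'a \<Rightarrow> 'a \<Rightarrow> 'a mat" where
  "mat2 a b c d = mat 2 2 (\<lambda>(i,j). if i = 0 then (if j = 0 then a else b) else (if j = 0 then c else d))"

lemma mat2_carrier[simp]: "mat2 a b c d \<in> carrier_mat 2 2" unfolding mat2_def by auto
lemma mat2_dim[simp]: "dim_row (mat2 a b c d) = 2" "dim_col (mat2 a b c d) = 2" unfolding mat2_def by auto

lemma sum_less2: "(\<Sum>l<2. f l) = f 0 + f (1::nat)"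
  by (simp add: numeral_2_eq_2)

lemma less2_cases: "(i::nat) < 2 \<Longrightarrow> i = 0 \<or> i = 1" by auto

lemma mat2_index: "i < 2 \<Longrightarrow> j < 2 \<Longrightarrow> mat2 a b c d $$ (i,j) = (if i = 0 then (if j = 0 then a else b) else (if j = 0 then c else d))"
  unfolding mat2_def by simp

lemma mat2_mult:
  fixes a :: "'a::comm_ring_1"
  shows "mat2 a b c d * mat2 a' b' c' d' = mat2 (a*a'+b*c') (a*b'+b*d') (c*a'+d*c') (c*b'+d*d')"
proof (rule eq_matI)
  fix i j assume i: "i < dim_row (mat2 (a*a'+b*c') (a*b'+b*d') (c*a'+d*c') (c*b'+d*d'))"
    and j: "j < dim_col (mat2 (a*a'+b*c') (a*b'+b*d') (c*a'+d*c') (c*b'+d*d'))"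
  then have i2: "i < 2" and j2: "j < 2" unfolding mat2_def by auto
  show "(mat2 a b c d * mat2 a' b' c' d') $$ (i, j) = mat2 (a*a'+b*c') (a*b'+b*d') (c*a'+d*c') (c*b'+d*d') $$ (i, j)"
    unfolding mult_sum[OF mat2_carrier mat2_carrier i2 j2] sum_less2 mat2_index[OF i2 j2]
    using i2 j2 by (auto simp: mat2_index)
qed auto

lemma mat2_one: "mat2 1 0 0 1 = (1\<^sub>m 2 :: 'a::comm_ring_1 mat)"
  by (rule eq_matI) (auto simp: mat2_index dest!: less2_cases)

lemma mat2_mult_vec:
  fixes a :: "'a::comm_ring_1"
  assumes v: "v \<in> carrier_vec 2"
  shows "(mat2 a b c d *\<^sub>v v) $ 0 = a * v$0 + b * v$1" "(mat2 a b c d *\<^sub>v v) $ 1 = c * v$0 + d * v$1"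
  by (subst mult_vec_sum[OF mat2_carrier v]; simp add: sum_less2 mat2_index)+

lemma bez_mat:
  assumes B: "bezout_domain TYPE('a::idom)"
  shows "\<exists>U. U \<in> carrier_mat 2 2 \<and> invertible_mat U \<and> (\<forall>v \<in> carrier_vec 2. v $ 0 = a \<longrightarrow> v $ 1 = (b::'a) \<longrightarrow> (U *\<^sub>v v) $ 1 = 0)"
proof -
  obtain g s t u w where g: "a = g*u" "b = g*w" "g = s*a + t*b" "s*u + t*w = 1"
    using bez2[OF B] by blast
  have 1: "mat2 s t (-w) u * mat2 u (-t) w s = 1\<^sub>m 2"
    unfolding mat2_mult mat2_one[symmetric] using g(4) by (simp add: algebra_simps)
  have 2: "mat2 u (-t) w s * mat2 s t (-w) u = 1\<^sub>m 2"
    unfolding mat2_mult mat2_one[symmetric] using g(4) by (simp add: algebra_simps)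
  have inv: "invertible_mat (mat2 s t (-w) u)" by (rule inv_intro[OF _ _ 1 2]) auto
  have "\<forall>v \<in> carrier_vec 2. v $ 0 = a \<longrightarrow> v $ 1 = b \<longrightarrow> (mat2 s t (-w) u *\<^sub>v v) $ 1 = 0"
  proof (intro ballI impI)
    fix v :: "'a vec" assume v: "v \<in> carrier_vec 2" "v $ 0 = a" "v $ 1 = b"
    have "(mat2 s t (-w) u *\<^sub>v v) $ 1 = -w * a + u * b" using mat2_mult_vec(2)[OF v(1)] v by simp
    also have "\<dots> = 0" unfolding g(1,2) by (simp add: algebra_simps)
    finally show "(mat2 s t (-w) u *\<^sub>v v) $ 1 = 0" .
  qed
  then show ?thesis using inv by (intro exI[of _ "mat2 s t (-w) u"]) auto
qed



lemma vec_first_index[simp]: "i < n \<Longrightarrow> vec_first v n $ i = v $ i" unfolding vec_first_def by simp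
lemma vec_last_index[simp]: "i < n \<Longrightarrow> vec_last v n $ i = v $ (dim_vec v - n + i)" unfolding vec_last_def by simp

lemma hermite_vec:
  assumes B: "bezout_domain TYPE('a::idom)"
  shows "v \<in> carrier_vec n \<Longrightarrow> \<exists>P. P \<in> carrier_mat n n \<and> invertible_mat P \<and> (\<forall>i. 0 < i \<and> i < n \<longrightarrow> (P *\<^sub>v v) $ i = (0::'a))"
proof (induction n arbitrary: v)
  case 0
  then show ?case using inv_one by (intro exI[of _ "1\<^sub>m 0"]) auto
next
  case (Suc n)
  show ?case
  proof (cases n)
    case 0
    then show ?thesis using inv_one by (intro exI[of _ "1\<^sub>m 1"]) auto
  next
    case (Suc k)
    define w where "w = vec_last v n"
    have wc: "w \<in> carrier_vec n" unfolding w_def by simp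
    obtain P' where P': "P' \<in> carrier_mat n n" "invertible_mat P'" "\<forall>i. 0 < i \<and> i < n \<longrightarrow> (P' *\<^sub>v w) $ i = 0"
      using Suc.IH[OF wc] by blast
    define Bm where "Bm = four_block_mat (1\<^sub>m 1) (0\<^sub>m 1 n) (0\<^sub>m n 1) P'"
    have vc: "v \<in> carrier_vec (1 + n)" using Suc.prems by simp
    have dv: "dim_vec v = Suc n" using Suc.prems by simp
    have Bc: "Bm \<in> carrier_mat (Suc n) (Suc n)" unfolding Bm_def using P'(1) by auto
    have Binv: "invertible_mat Bm" unfolding Bm_def by (rule inv_block[OF _ inv_one P'(1,2)]) simp
    define u where "u = Bm *\<^sub>v v"
    have u_eq: "u = (1\<^sub>m 1 *\<^sub>v vec_first v 1) @\<^sub>v (P' *\<^sub>v w)"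
      unfolding u_def Bm_def w_def by (rule blockdiag_mult_vec[OF _ P'(1) vc]) simp
    have uc: "u \<in> carrier_vec (Suc n)" using Bc Suc.prems unfolding u_def by simp
    have u0: "u $ 0 = v $ 0" unfolding u_eq by simp
    have ui: "u $ (Suc i) = (P' *\<^sub>v w) $ i" if "i < n" for i
      unfolding u_eq using that P'(1) by simp
    obtain U where U: "U \<in> carrier_mat 2 2" "invertible_mat U"
      "\<forall>x \<in> carrier_vec 2. x $ 0 = v $ 0 \<longrightarrow> x $ 1 = (P' *\<^sub>v w) $ 0 \<longrightarrow> (U *\<^sub>v x) $ 1 = 0"
      using bez_mat[OF B] by blast
    define G where "G = four_block_mat U (0\<^sub>m 2 k) (0\<^sub>m k 2) (1\<^sub>m k)"
    have nk: "Suc n = 2 + k" using Suc by simp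
    have Gc: "G \<in> carrier_mat (Suc n) (Suc n)" unfolding G_def nk using U(1) by auto
    have Ginv: "invertible_mat G" unfolding G_def by (rule inv_block[OF U(1,2) _ inv_one]) simp
    have uc2: "u \<in> carrier_vec (2 + k)" using uc nk by simp
    have Gu: "G *\<^sub>v u = (U *\<^sub>v vec_first u 2) @\<^sub>v (1\<^sub>m k *\<^sub>v vec_last u k)"
      unfolding G_def by (rule blockdiag_mult_vec[OF U(1) _ uc2]) simp
    have du: "dim_vec u = 2 + k" using uc2 by simp
    have zero: "(G *\<^sub>v u) $ i = 0" if i: "0 < i" "i < Suc n" for i
    proof (cases "i = 1")
      case True
      have "vec_first u 2 $ 0 = v $ 0" using u0 by simp
      moreover have "vec_first u 2 $ 1 = (P' *\<^sub>v w) $ 0" using ui[of 0] Suc by simp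
      ultimately have "(U *\<^sub>v vec_first u 2) $ 1 = 0" using U(3) by simp
      then show ?thesis unfolding Gu using True U(1) by simp
    next
      case False
      then have i2: "2 \<le> i" using i by simp
      have "(G *\<^sub>v u) $ i = (1\<^sub>m k *\<^sub>v vec_last u k) $ (i - 2)"
        unfolding Gu using i2 i U(1) nk by simp
      also have "\<dots> = u $ i"
      proof -
        have "Suc (Suc (i - 2)) = i" using i2 by simp
        then show ?thesis using i2 i nk du by simp
      qed
      also have "\<dots> = (P' *\<^sub>v w) $ (i - 1)" using ui[of "i - 1"] i2 i by simp
      also have "\<dots> = 0" using P'(3) i2 i by simp
      finally show ?thesis .
    qed
    have "(G * Bm) *\<^sub>v v = G *\<^sub>v u" unfolding u_def using Gc Bc Suc.prems by simp
    then show ?thesis using zero Gc Bc inv_mult[OF Gc Ginv Bc Binv]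
      by (intro exI[of _ "G * Bm"]) auto
  qed
qed



lemma dvd_mat_left:
  fixes e :: "'a::comm_ring_1"
  assumes "\<forall>i<m. \<forall>j<n. e dvd A$$(i,j)" "A \<in> carrier_mat m n" "P \<in> carrier_mat k m" "i < k" "j < n"
  shows "e dvd (P*A)$$(i,j)"
  unfolding mult_sum[OF assms(3,2,4,5)] using assms(1,5) by (auto intro!: dvd_sum dvd_mult)

lemma dvd_mat_right:
  fixes e :: "'a::comm_ring_1"
  assumes "\<forall>i<m. \<forall>j<n. e dvd A$$(i,j)" "A \<in> carrier_mat m n" "Q \<in> carrier_mat n k" "i < m" "j < k"
  shows "e dvd (A*Q)$$(i,j)"
  unfolding mult_sum[OF assms(2,3,4,5)] using assms(1,4) by (auto intro!: dvd_sum dvd_mult2)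

lemma sum_sparse:
  fixes f :: "nat \<Rightarrow> 'a::comm_ring_1"
  assumes "0 < N" "\<forall>l. 0 < l \<and> l < N \<longrightarrow> g l = 0"
  shows "(\<Sum>l<N. f l * g l) = f 0 * g 0"
proof -
  have "(\<Sum>l<N. f l * g l) = (\<Sum>l<N. if l = 0 then f 0 * g 0 else 0)"
    by (rule sum.cong) (use assms in auto)
  also have "\<dots> = f 0 * g 0" using assms(1) by (simp add: sum.delta)
  finally show ?thesis .
qed

lemma sum_if_two:
  fixes g :: "nat \<Rightarrow> 'a::comm_ring_1"
  assumes "j < N"
  shows "(\<Sum>l<N. g l * (if l = j then 1 else if l = 0 then u else 0)) = (if j = 0 then g 0 else g j + g 0 * u)"
proof (cases "j = 0")
  case True
  have "(\<Sum>l<N. g l * (if l = j then 1 else if l = 0 then u else 0)) = (\<Sum>l<N. if l = 0 then g 0 else 0)"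
    by (rule sum.cong) (use True in auto)
  also have "\<dots> = g 0" using assms True by (simp add: sum.delta)
  finally show ?thesis using True by simp
next
  case False
  have "(\<Sum>l<N. g l * (if l = j then 1 else if l = 0 then u else 0)) = (\<Sum>l<N. (if l = j then g j else 0) + (if l = 0 then g 0 * u else 0))"
    by (rule sum.cong) (use False in auto)
  also have "\<dots> = g j + g 0 * u" using assms False by (simp add: sum.distrib sum.delta)
  finally show ?thesis using False by simp
qed

lemma smith_block:
  fixes c :: "'a::comm_ring_1"
  assumes D: "D \<in> carrier_mat m n" "smith_diag D" and cd: "\<forall>i<m. \<forall>j<n. c dvd D$$(i,j)"
  shows "smith_diag (four_block_mat (mat 1 1 (\<lambda>_. c)) (0\<^sub>m 1 n) (0\<^sub>m m 1) D)"
  unfolding smith_diag_def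
proof (intro conjI allI impI)
  let ?F = "four_block_mat (mat 1 1 (\<lambda>_. c)) (0\<^sub>m 1 n) (0\<^sub>m m 1) D"
  have dims: "dim_row ?F = Suc m" "dim_col ?F = Suc n" using D by auto
  fix i j assume i: "i < dim_row ?F" and j: "j < dim_col ?F" and ij: "i \<noteq> j"
  show "?F $$ (i,j) = 0"
  proof (cases "i = 0 \<or> j = 0")
    case True
    then show ?thesis using i j ij D by auto
  next
    case False
    then have "D $$ (i - 1, j - 1) = 0" using D(2) i j ij dims D(1) unfolding smith_diag_def by auto
    then show ?thesis using False i j D by auto
  qed
next
  let ?F = "four_block_mat (mat 1 1 (\<lambda>_. c)) (0\<^sub>m 1 n) (0\<^sub>m m 1) D"
  fix i assume i: "Suc i < min (dim_row ?F) (dim_col ?F)"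
  then have i': "Suc i < min (Suc m) (Suc n)" using D by auto
  show "?F $$ (i,i) dvd ?F $$ (Suc i, Suc i)"
  proof (cases i)
    case 0
    then have "0 < m" "0 < n" using i' by auto
    then show ?thesis using cd 0 D by auto
  next
    case (Suc i0)
    then have "Suc i0 < min (dim_row D) (dim_col D)" using i' D by auto
    then have "D $$ (i0, i0) dvd D $$ (Suc i0, Suc i0)" using D(2) unfolding smith_diag_def by blast
    then show ?thesis using Suc i' D by auto
  qed
qed



lemma smith_exists:
  assumes B: "bezout_domain TYPE('a::idom)" and G: "\<And>m n f. goodf m n (f :: nat \<Rightarrow> nat \<Rightarrow> 'a)"
  shows "A \<in> carrier_mat m n \<Longrightarrow> \<exists>P Q. P \<in> carrier_mat m m \<and> Q \<in> carrier_mat n n \<and>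
           invertible_mat P \<and> invertible_mat Q \<and> smith_diag (P * A * (Q :: 'a mat))"
proof (induction m arbitrary: n A)
  case 0
  then show ?case using inv_one[where 'a='a]
    by (intro exI[of _ "1\<^sub>m 0"] exI[of _ "1\<^sub>m n"]) (auto simp: smith_diag_def)
next
  case (Suc m)
  note Ac = Suc.prems
  show ?case
  proof (cases n)
    case 0
    then show ?thesis using inv_one[where 'a='a] Ac
      by (intro exI[of _ "1\<^sub>m (Suc m)"] exI[of _ "1\<^sub>m 0"]) (auto simp: smith_diag_def)
  next
    case (Suc n')
    have n0: "0 < n" using Suc by simp
    obtain x y where xy: "\<forall>i<Suc m. \<forall>j<n. (\<Sum>i<Suc m. \<Sum>j<n. x i * A$$(i,j) * y j) dvd A$$(i,j)"
      using G[of "Suc m" n "\<lambda>i j. A$$(i,j)"] unfolding goodf_def by blast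
    define e where "e = (\<Sum>i<Suc m. \<Sum>j<n. x i * A$$(i,j) * y j)"
    define yv where "yv = vec n y"
    have yvc: "yv \<in> carrier_vec n" unfolding yv_def by simp
    obtain Py where Py: "Py \<in> carrier_mat n n" "invertible_mat Py" "\<forall>i. 0 < i \<and> i < n \<longrightarrow> (Py *\<^sub>v yv) $ i = 0"
      using hermite_vec[OF B yvc] by blast
    obtain Q1 where Q1: "Q1 \<in> carrier_mat n n" "Py * Q1 = 1\<^sub>m n" "Q1 * Py = 1\<^sub>m n"
      using inv_obtain[OF Py(2,1)] by blast
    have Q1inv: "invertible_mat Q1" by (rule inv_intro[OF Q1(1) Py(1) Q1(3) Q1(2)])
    define M where "M = A * Q1"
    have Mc: "M \<in> carrier_mat (Suc m) n" unfolding M_def using Ac Q1 by simp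
    have colc: "col M 0 \<in> carrier_vec (Suc m)" using Mc n0 by simp
    obtain P1 where P1: "P1 \<in> carrier_mat (Suc m) (Suc m)" "invertible_mat P1"
        "\<forall>i. 0 < i \<and> i < Suc m \<longrightarrow> (P1 *\<^sub>v col M 0) $ i = 0"
      using hermite_vec[OF B colc] by blast
    obtain P1' where P1': "P1' \<in> carrier_mat (Suc m) (Suc m)" "P1 * P1' = 1\<^sub>m (Suc m)" "P1' * P1 = 1\<^sub>m (Suc m)"
      using inv_obtain[OF P1(2,1)] by blast
    define D1 where "D1 = P1 * M"
    have D1c: "D1 \<in> carrier_mat (Suc m) n" unfolding D1_def using P1 Mc by simp
    have D1col: "\<forall>i. 0 < i \<and> i < Suc m \<longrightarrow> D1 $$ (i,0) = 0"
    proof (intro allI impI)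
      fix i assume i: "0 < i \<and> i < Suc m"
      have "D1 $$ (i,0) = (P1 *\<^sub>v col M 0) $ i" unfolding D1_def using i P1(1) Mc n0 by simp
      then show "D1 $$ (i,0) = 0" using P1(3) i by simp
    qed
    define c where "c = D1 $$ (0,0)"
    have M_eq: "M = P1' * D1"
    proof -
      have "P1' * D1 = P1' * P1 * M" unfolding D1_def using P1 P1' Mc by (simp add: assoc_mult_mat[symmetric])
      also have "\<dots> = M" using P1' Mc by simp
      finally show ?thesis by simp
    qed
    have Mi0: "M $$ (i,0) = P1' $$ (i,0) * c" if "i < Suc m" for i
    proof -
      have "M $$ (i,0) = (\<Sum>l<Suc m. P1' $$ (i,l) * D1 $$ (l,0))"
        unfolding M_eq by (rule mult_sum[OF P1'(1) D1c that n0])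
      also have "\<dots> = P1' $$ (i,0) * D1 $$ (0,0)" by (rule sum_sparse) (use D1col in auto)
      finally show ?thesis unfolding c_def .
    qed
    define u where "u = Py *\<^sub>v yv"
    have uc: "u \<in> carrier_vec n" unfolding u_def using Py yvc by simp
    have Ayv: "A *\<^sub>v yv = M *\<^sub>v u"
    proof -
      have "yv = (Q1 * Py) *\<^sub>v yv" using Q1(3) yvc by simp
      also have "\<dots> = Q1 *\<^sub>v u" unfolding u_def by (rule assoc_mult_mat_vec[OF Q1(1) Py(1) yvc])
      finally have "A *\<^sub>v yv = A *\<^sub>v (Q1 *\<^sub>v u)" by simp
      also have "\<dots> = M *\<^sub>v u" unfolding M_def using Ac Q1 uc by simp
      finally show ?thesis .
    qed
    have Ai: "(A *\<^sub>v yv) $ i = P1' $$ (i,0) * c * u $ 0" if "i < Suc m" for i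
    proof -
      have "(M *\<^sub>v u) $ i = (\<Sum>l<n. M $$ (i,l) * u $ l)" by (rule mult_vec_sum[OF Mc uc that])
      also have "\<dots> = M $$ (i,0) * u $ 0" by (rule sum_sparse) (use n0 Py(3) in \<open>auto simp: u_def\<close>)
      finally show ?thesis unfolding Ayv using Mi0[OF that] by simp
    qed
    have ce: "c dvd e"
    proof -
      have "e = (\<Sum>i<Suc m. x i * (A *\<^sub>v yv) $ i)"
        unfolding e_def
      proof (rule sum.cong[OF refl])
        fix i assume i: "i \<in> {..<Suc m}"
        have "(A *\<^sub>v yv) $ i = (\<Sum>j<n. A $$ (i,j) * yv $ j)" by (rule mult_vec_sum[OF Ac yvc]) (use i in auto)
        also have "\<dots> = (\<Sum>j<n. A $$ (i,j) * y j)" by (rule sum.cong) (auto simp: yv_def)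
        finally show "(\<Sum>j<n. x i * A $$ (i, j) * y j) = x i * (A *\<^sub>v yv) $ i"
          by (simp add: sum_distrib_left mult.assoc)
      qed
      also have "c dvd \<dots>" by (rule dvd_sum) (auto simp: Ai)
      finally show ?thesis .
    qed
    have eA: "\<forall>i<Suc m. \<forall>j<n. e dvd A$$(i,j)" using xy unfolding e_def by blast
    have cD1: "\<forall>i<Suc m. \<forall>j<n. c dvd D1$$(i,j)"
    proof (intro allI impI)
      fix i j assume i: "i < Suc m" and j: "j < n"
      have "\<forall>i<Suc m. \<forall>j<n. e dvd M$$(i,j)" unfolding M_def using dvd_mat_right[OF eA Ac Q1(1)] by blast
      then have "e dvd D1$$(i,j)" unfolding D1_def using dvd_mat_left[OF _ Mc P1(1) i j] by blast
      then show "c dvd D1$$(i,j)" using ce by (rule dvd_trans[rotated])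
    qed
    have "\<forall>j. \<exists>q. j < n \<longrightarrow> D1$$(0,j) = c * q" using cD1 by (auto elim!: dvdE)
    then obtain f where f: "\<forall>j. j < n \<longrightarrow> D1$$(0,j) = c * f j" by (metis choice)
    define Q2 where "Q2 = mat n n (\<lambda>(i,j). if i = j then 1 else if i = 0 then - f j else (0::'a))"
    define Q2' where "Q2' = mat n n (\<lambda>(i,j). if i = j then 1 else if i = 0 then f j else (0::'a))"
    have Q2c: "Q2 \<in> carrier_mat n n" "Q2' \<in> carrier_mat n n" unfolding Q2_def Q2'_def by auto
    have Q2a: "Q2 * Q2' = 1\<^sub>m n"
    proof (rule eq_matI)
      fix i j assume i0: "i < dim_row (1\<^sub>m n :: 'a mat)" and j0: "j < dim_col (1\<^sub>m n :: 'a mat)"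
      have i: "i < n" and j: "j < n" using i0 j0 by auto
      have "(Q2 * Q2') $$ (i,j) = (\<Sum>l<n. Q2 $$ (i,l) * (if l = j then 1 else if l = 0 then f j else 0))"
        unfolding mult_sum[OF Q2c i j] by (rule sum.cong) (auto simp: Q2'_def j)
      also have "\<dots> = (if j = 0 then Q2 $$ (i,0) else Q2 $$ (i,j) + Q2 $$ (i,0) * f j)"
        by (rule sum_if_two) (use j in simp)
      also have "\<dots> = 1\<^sub>m n $$ (i,j)" using i j n0 by (auto simp: Q2_def)
      finally show "(Q2 * Q2') $$ (i,j) = 1\<^sub>m n $$ (i,j)" .
    qed (use Q2c in auto)
    have Q2b: "Q2' * Q2 = 1\<^sub>m n"
    proof (rule eq_matI)
      fix i j assume i0: "i < dim_row (1\<^sub>m n :: 'a mat)" and j0: "j < dim_col (1\<^sub>m n :: 'a mat)"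
      have i: "i < n" and j: "j < n" using i0 j0 by auto
      have "(Q2' * Q2) $$ (i,j) = (\<Sum>l<n. Q2' $$ (i,l) * (if l = j then 1 else if l = 0 then - f j else 0))"
        unfolding mult_sum[OF Q2c(2,1) i j] by (rule sum.cong) (auto simp: Q2_def j)
      also have "\<dots> = (if j = 0 then Q2' $$ (i,0) else Q2' $$ (i,j) + Q2' $$ (i,0) * - f j)"
        by (rule sum_if_two) (use j in simp)
      also have "\<dots> = 1\<^sub>m n $$ (i,j)" using i j n0 by (auto simp: Q2'_def)
      finally show "(Q2' * Q2) $$ (i,j) = 1\<^sub>m n $$ (i,j)" .
    qed (use Q2c in auto)
    have Q2inv: "invertible_mat Q2" by (rule inv_intro[OF Q2c Q2a Q2b])
    define A'' where "A'' = mat m n' (\<lambda>(i,j). D1 $$ (Suc i, Suc j))"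
    define C where "C = mat 1 1 (\<lambda>_. c)"
    have A''c: "A'' \<in> carrier_mat m n'" unfolding A''_def by simp
    have D2: "D1 * Q2 = four_block_mat C (0\<^sub>m 1 n') (0\<^sub>m m 1) A''"
    proof (rule eq_matI)
      fix i j assume i: "i < dim_row (four_block_mat C (0\<^sub>m 1 n') (0\<^sub>m m 1) A'')"
        and j: "j < dim_col (four_block_mat C (0\<^sub>m 1 n') (0\<^sub>m m 1) A'')"
      have i': "i < Suc m" and j': "j < n" using i j Suc by (auto simp: C_def A''_def)
      have "(D1 * Q2) $$ (i,j) = (\<Sum>l<n. D1 $$ (i,l) * (if l = j then 1 else if l = 0 then - f j else 0))"
        unfolding mult_sum[OF D1c Q2c(1) i' j'] by (rule sum.cong) (auto simp: Q2_def j')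
      also have "\<dots> = (if j = 0 then D1 $$ (i,0) else D1 $$ (i,j) + D1 $$ (i,0) * - f j)"
        by (rule sum_if_two) (use j' in simp)
      also have "\<dots> = four_block_mat C (0\<^sub>m 1 n') (0\<^sub>m m 1) A'' $$ (i,j)"
      proof (cases "i = 0")
        case True
        show ?thesis
        proof (cases "j = 0")
          case True
          then show ?thesis using \<open>i = 0\<close> by (simp add: C_def c_def)
        next
          case False
          have "D1 $$ (0,j) = c * f j" using f j' by blast
          then have "D1 $$ (i,j) + D1 $$ (i,0) * - f j = 0" using \<open>i = 0\<close> by (simp add: c_def[symmetric])
          then show ?thesis using False \<open>i = 0\<close> j' Suc by (simp add: C_def A''_def)
        qed
      next
        case False
        then show ?thesis using i' j' D1col Suc by (auto simp: C_def A''_def)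
      qed
      finally show "(D1 * Q2) $$ (i,j) = four_block_mat C (0\<^sub>m 1 n') (0\<^sub>m m 1) A'' $$ (i,j)" .
    qed (use D1c Q2c Suc in \<open>auto simp: C_def A''_def\<close>)
    have cA'': "\<forall>i<m. \<forall>j<n'. c dvd A''$$(i,j)" using cD1 Suc unfolding A''_def by auto
    obtain P'' Q'' where PQ'': "P'' \<in> carrier_mat m m" "Q'' \<in> carrier_mat n' n'" "invertible_mat P''"
      "invertible_mat Q''" "smith_diag (P'' * A'' * Q'')"
      using Suc.IH[OF A''c] by blast
    define BP where "BP = four_block_mat (1\<^sub>m 1) (0\<^sub>m 1 m) (0\<^sub>m m 1) P''"
    define BQ where "BQ = four_block_mat (1\<^sub>m 1) (0\<^sub>m 1 n') (0\<^sub>m n' 1) Q''"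
    have BPc: "BP \<in> carrier_mat (Suc m) (Suc m)" unfolding BP_def using PQ'' by auto
    have BQc: "BQ \<in> carrier_mat n n" unfolding BQ_def using PQ'' Suc by auto
    have BPinv: "invertible_mat BP" unfolding BP_def by (rule inv_block[OF _ inv_one PQ''(1,3)]) simp
    have BQinv: "invertible_mat BQ" unfolding BQ_def by (rule inv_block[OF _ inv_one PQ''(2,4)]) simp
    have Cc: "C \<in> carrier_mat 1 1" unfolding C_def by simp
    define D'' where "D'' = P'' * A'' * Q''"
    have D''c: "D'' \<in> carrier_mat m n'" unfolding D''_def using PQ'' A''c by simp
    have prod: "BP * P1 * A * (Q1 * Q2 * BQ) = BP * (D1 * Q2) * BQ"
    proof -
      define X where "X = P1 * A"
      have Xc: "X \<in> carrier_mat (Suc m) n" unfolding X_def using P1 Ac by simp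
      have D1X: "D1 = X * Q1" unfolding D1_def M_def X_def by (rule assoc_mult_mat[symmetric, OF P1(1) Ac Q1(1)])
      have Q12c: "Q1 * Q2 \<in> carrier_mat n n" using Q1 Q2c by simp
      have QQc: "Q1 * Q2 * BQ \<in> carrier_mat n n" using Q12c BQc by simp
      have XQc: "X * Q1 * Q2 \<in> carrier_mat (Suc m) n" using Xc Q1 Q2c by simp
      have "BP * P1 * A * (Q1 * Q2 * BQ) = BP * X * (Q1 * Q2 * BQ)"
        unfolding X_def by (simp add: assoc_mult_mat[OF BPc P1(1) Ac])
      also have "\<dots> = BP * (X * (Q1 * Q2 * BQ))"
        by (rule assoc_mult_mat[OF BPc Xc QQc])
      also have "X * (Q1 * Q2 * BQ) = X * (Q1 * Q2) * BQ"
        by (rule assoc_mult_mat[symmetric, OF Xc Q12c BQc])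
      also have "X * (Q1 * Q2) = X * Q1 * Q2"
        by (rule assoc_mult_mat[symmetric, OF Xc Q1(1) Q2c(1)])
      also have "BP * (X * Q1 * Q2 * BQ) = BP * (X * Q1 * Q2) * BQ"
        by (rule assoc_mult_mat[symmetric, OF BPc XQc BQc])
      finally show ?thesis unfolding D1X .
    qed
    have blk: "BP * (D1 * Q2) * BQ = four_block_mat C (0\<^sub>m 1 n') (0\<^sub>m m 1) D''"
    proof -
      have bd: "BP * (D1 * Q2) = four_block_mat C (0\<^sub>m 1 n') (0\<^sub>m m 1) (P'' * A'')"
        unfolding D2 BP_def
        by (subst mult_four_block_mat[of _ 1 1 _ m _ m _ _ 1 _ n']) (use Cc PQ'' A''c in auto)
      show ?thesis unfolding bd BQ_def D''_def
        by (subst mult_four_block_mat[of _ 1 1 _ n' _ m _ _ 1 _ n']) (use Cc PQ'' A''c in auto)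
    qed
    have sm: "smith_diag (four_block_mat C (0\<^sub>m 1 n') (0\<^sub>m m 1) D'')"
      unfolding C_def
    proof (rule smith_block[OF D''c])
      show "smith_diag D''" unfolding D''_def by (rule PQ''(5))
      show "\<forall>i<m. \<forall>j<n'. c dvd D'' $$ (i, j)"
      proof (intro allI impI)
        fix i j assume i: "i < m" and j: "j < n'"
        have "\<forall>i<m. \<forall>j<n'. c dvd (P'' * A'')$$(i,j)" using dvd_mat_left[OF cA'' A''c PQ''(1)] by blast
        then show "c dvd D'' $$ (i,j)" unfolding D''_def using dvd_mat_right[OF _ _ PQ''(2) i j] PQ''(1) A''c by auto
      qed
    qed
    show ?thesis
    proof (intro exI conjI)
      show "BP * P1 \<in> carrier_mat (Suc m) (Suc m)" using BPc P1 by simp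
      show "Q1 * Q2 * BQ \<in> carrier_mat n n" using Q1 Q2c BQc by simp
      show "invertible_mat (BP * P1)" by (rule inv_mult[OF BPc BPinv P1(1,2)])
      show "invertible_mat (Q1 * Q2 * BQ)"
        by (rule inv_mult[OF _ inv_mult[OF Q1(1) Q1inv Q2c(1) Q2inv] BQc BQinv]) (use Q1 Q2c in simp)
      show "smith_diag (BP * P1 * A * (Q1 * Q2 * BQ))" unfolding prod blk by (rule sm)
    qed
  qed
qed



lemma EDR_imp_K:
  assumes B: "bezout_domain TYPE('a::idom)" and E: "elementary_divisor_ring TYPE('a)"
  shows "KProp TYPE('a)"
  unfolding KProp_def
proof (intro allI impI)
  fix a b c :: 'a
  assume prim: "\<forall>d. d dvd a \<longrightarrow> d dvd b \<longrightarrow> d dvd c \<longrightarrow> d dvd 1"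
  define A where "A = mat2 a 0 b c"
  have Ac: "A \<in> carrier_mat 2 2" unfolding A_def by simp
  obtain P Q where PQ: "P \<in> carrier_mat 2 2" "Q \<in> carrier_mat 2 2" "invertible_mat P" "invertible_mat Q"
    "smith_diag (P * A * Q)"
    using E Ac unfolding elementary_divisor_ring_def by blast
  define D where "D = P * A * Q"
  have Dc: "D \<in> carrier_mat 2 2" unfolding D_def using PQ Ac by simp
  have sd: "smith_diag D" unfolding D_def by (rule PQ(5))
  have D01: "D $$ (0,1) = 0" "D $$ (1,0) = 0" using sd Dc unfolding smith_diag_def by auto
  have D11: "D $$ (0,0) dvd D $$ (1,1)" using sd Dc unfolding smith_diag_def by auto
  have dD: "\<forall>i<2. \<forall>j<2. D $$ (0,0) dvd D $$ (i,j)"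
    using D01 D11 by (auto dest!: less2_cases)
  obtain P' where P': "P' \<in> carrier_mat 2 2" "P * P' = 1\<^sub>m 2" "P' * P = 1\<^sub>m 2" using inv_obtain PQ(3,1) by blast
  obtain Q' where Q': "Q' \<in> carrier_mat 2 2" "Q * Q' = 1\<^sub>m 2" "Q' * Q = 1\<^sub>m 2" using inv_obtain PQ(4,2) by blast
  have PAc: "P * A \<in> carrier_mat 2 2" using PQ Ac by simp
  have AQc: "A * Q \<in> carrier_mat 2 2" using PQ Ac by simp
  have Aeq: "A = P' * D * Q'"
  proof -
    have "P' * D = P' * (P * A) * Q" unfolding D_def by (rule assoc_mult_mat[symmetric, OF P'(1) PAc PQ(2)])
    also have "P' * (P * A) = P' * P * A" by (rule assoc_mult_mat[symmetric, OF P'(1) PQ(1) Ac])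
    also have "\<dots> = A" using P' Ac by simp
    finally have "P' * D * Q' = A * Q * Q'" by simp
    also have "\<dots> = A * (Q * Q')" by (rule assoc_mult_mat[OF Ac PQ(2) Q'(1)])
    also have "\<dots> = A" using Q' Ac by simp
    finally show ?thesis by simp
  qed
  have dA: "\<forall>i<2. \<forall>j<2. D $$ (0,0) dvd A $$ (i,j)"
  proof (intro allI impI)
    fix i j :: nat assume i: "i < 2" and j: "j < 2"
    have PDc: "P' * D \<in> carrier_mat 2 2" using P' Dc by simp
    have "\<forall>i<2. \<forall>j<2. D $$ (0,0) dvd (P' * D) $$ (i,j)" using dvd_mat_left[OF dD Dc P'(1)] by blast
    then show "D $$ (0,0) dvd A $$ (i,j)" unfolding Aeq using dvd_mat_right[OF _ PDc Q'(1) i j] by blast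
  qed
  have "D $$ (0,0) dvd A $$ (0,0)" "D $$ (0,0) dvd A $$ (1,0)" "D $$ (0,0) dvd A $$ (1,1)"
    using dA by auto
  then have "D $$ (0,0) dvd a" "D $$ (0,0) dvd b" "D $$ (0,0) dvd c"
    unfolding A_def by (simp_all add: mat2_index)
  then have unit: "D $$ (0,0) dvd 1" using prim by blast
  have "D $$ (0,0) = (P * A) $$ (0,0) * Q $$ (0,0) + (P * A) $$ (0,1) * Q $$ (1,0)"
    unfolding D_def mult_sum[OF PAc PQ(2), of 0 0, simplified] sum_less2 by simp
  also have "(P * A) $$ (0,0) = P $$ (0,0) * a + P $$ (0,1) * b"
    by (subst mult_sum[OF PQ(1) Ac]) (auto simp: sum_less2 A_def mat2_index)
  also have "(P * A) $$ (0,1) = P $$ (0,1) * c"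
    by (subst mult_sum[OF PQ(1) Ac]) (auto simp: sum_less2 A_def mat2_index)
  finally have D00: "D $$ (0,0) = P $$ (0,0) * (a * Q $$ (0,0)) + P $$ (0,1) * (b * Q $$ (0,0) + c * Q $$ (1,0))"
    by (simp add: algebra_simps)
  have "gcd_one (a * Q $$ (0,0)) (b * Q $$ (0,0) + c * Q $$ (1,0))"
    unfolding gcd_one_def
  proof (intro allI impI)
    fix d assume d: "d dvd a * Q $$ (0,0)" "d dvd b * Q $$ (0,0) + c * Q $$ (1,0)"
    have "d dvd D $$ (0,0)" unfolding D00 by (rule dvd_add[OF dvd_mult[OF d(1)] dvd_mult[OF d(2)]])
    then show "d dvd 1" using unit by (rule dvd_trans)
  qed
  then show "\<exists>p t. gcd_one (a * p) (b * p + c * t)" by blast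
qed

theorem theorem2p13:
  assumes "bezout_domain TYPE('a::idom)"
  shows "elementary_divisor_ring TYPE('a) \<longleftrightarrow>
    (\<forall>a1 a2 b1 b2 :: 'a. gcd_one a1 a2 \<longrightarrow> gcd_one b1 b2 \<longrightarrow>
       (\<exists>r \<alpha> \<beta>. b1 + r * b2 = \<alpha> * \<beta> \<and>
                 gcd_one \<alpha> \<beta> \<and> gcd_one a1 \<alpha> \<and> gcd_one a2 \<beta>))"
proof -
  note B = assms
  have "elementary_divisor_ring TYPE('a) \<longleftrightarrow> CProp TYPE('a)"
  proof
    assume E: "elementary_divisor_ring TYPE('a)"
    show "CProp TYPE('a)" by (rule K_imp_C[OF B EDR_imp_K[OF B E]])
  next
    assume C: "CProp TYPE('a)"
    have G: "\<And>m n f. goodf m n (f :: nat \<Rightarrow> nat \<Rightarrow> 'a)" by (rule goodall[OF B C_imp_K[OF B C]])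
    show "elementary_divisor_ring TYPE('a)"
      unfolding elementary_divisor_ring_def
      using smith_exists[OF B G] by blast
  qed
  then show ?thesis unfolding CProp_def .
qed

end
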